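(* Consider the nonlinear kinetic equation with longitudinal scattering described in the context, with $d\sigma\ge2$ and $g>0$, and a maximally extended local solution on $[0,z_* )$ satisfying the standing assumptions. Define $$F(z)=V_x(0)+2V_{xp}(0)z+d\sigma(H(0)-\bar H)z^2+\frac{d\sigma R}{3}z^3,\qquad z_0=\frac{\bar H-H(0)+\sqrt{(H(0)-\bar H)^2-2RV_{xp}(0)/(d\sigma)}}{R}.$$ If $F(z_0)\le0$ and either (i) $V_{xp}(0)<0$, or (ii) $V_{xp}(0)>0$ and $H(0)<\bar H-\sqrt{2RV_{xp}(0)/(d\sigma)}$, then the solution develops a singularity at a finite time: $z_*\le z_0$.
   Context: Setting. Let $d\ge1$, $\sigma>0$, $g\in\mathbb R$. Let $\Phi(w,\mathbf p)\ge0$, $(w,\mathbf p)\in\mathbb R\times\mathbb R^d$, be a power spectrum density, rapidly decaying, with $\Phi(w,\mathbf p)=\Phi(-w,\mathbf p)=\Phi(w,-\mathbf p)=\Phi(-w,-\mathbf p)$. The longitudinal scattering operator $\mathcal L$ is either the linear Boltzmann operator $\mathcal L W(\mathbf p)=2\pi\int\Phi(0,\mathbf q-\mathbf p)[W(\mathbf q)-W(\mathbf p)]d\mathbf q$, in which case $R:=2\pi\int\Phi(0,\mathbf q)|\mathbf q|^2d\mathbf q$, or the Fokker–Planck operator $\mathcal LW=\nabla_{\mathbf p}\cdot(\mathbf D\nabla_{\mathbf p}W)$ with $\mathbf D=\pi\int\Phi(0,\mathbf q)\mathbf q\otimes\mathbf q\,d\mathbf q$, in which case $R:=2\,\mathrm{trace}(\mathbf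 D)$. The kinetic equation is $\partial_zW+\mathbf p\cdot\nabla_{\mathbf x}W+\nabla_{\mathbf x}U\cdot\nabla_{\mathbf p}W=\mathcal LW$ for $W(z,\mathbf x,\mathbf p)\ge0$, $\mathbf x,\mathbf p\in\mathbb R^d$, with $\rho(z,\mathbf x)=\int W\,d\mathbf p$ and $U=g\rho^{\sigma}$, understood weakly: $\partial_z\int\Theta W-\int\mathbf p\cdot\nabla_{\mathbf x}\Theta\,W-\int\nabla_{\mathbf x}U\cdot\nabla_{\mathbf p}\Theta\,W-\int(\mathcal L^*\Theta)W=0$ for smooth rapidly decaying $\Theta$. Normalization $\int W\,d\mathbf x\,d\mathbf p=1$. Notation (all integrals over $\mathbb R^{2d}$ against $W(z,\cdot)$): $\bar{\mathbf x}=\int\mathbf xW$, $\bar{\mathbf p}=\int\mathbf pW$, $V_x=\int|\mathbf x-\bar{\mathbf x}|^2W$, $V_p=\int|\mathbf p-\bar{\mathbf p}|^2W$, $V_{xp}=\int(\mathbf x-\bar{\mathbf x})\cdot(\mathbf p-\bar{\mathbf p})W$, Hamiltonian $H=\frac12\int|\mathbf p|^2W-\frac{g}{\sigma+1}\int\rho^{\sigma+1}d\mathbf x$, mean Hamiltonian $\bar H=\frac12|\bar{\mathbf p}|^2$ (constant in $z$ in this setting). Standing assumptions: a local solution exists in the space of nonnegative measures with square-integrable density, finite Dirichlet form $-\int W\mathcal LW$, finite positive variances $V_x,V_p$ and finite Hamiltonian; $[0,z_* )$ is the maximal interval of existence of this solution ($z_*<\infty$ means the solution develops a finite-time singularity);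 on $[0,z_* )$ the weak formulation may be applied with the test functions $x_i,p_i,|\mathbf x|^2,\mathbf x\cdot\mathbf p,|\mathbf p|^2$ (so the energy law and variance identity hold); and $W$ has mixed-state (Wigner measure) structure, so $V_{xp}^2\le V_xV_p$. *)

theory Defs
  imports "HOL-Analysis.Analysis"
begin

definition mom :: "(real \<Rightarrow> (real^'d) \<times> (real^'d) \<Rightarrow> real) \<Rightarrow> real
                   \<Rightarrow> (real^'d \<Rightarrow> real^'d \<Rightarrow> real) \<Rightarrow> real" where
  "mom W z \<Theta> = (\<integral>xp. \<Theta> (fst xp) (snd xp) * W z xp \<partial>lborel)"

definition dens :: "(real \<Rightarrow> (real^'d) \<times> (real^'d) \<Rightarrow> real) \<Rightarrow> real \<Rightarrow> real^'d \<Rightarrow> real" where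
  "dens W z x = (\<integral>p. W z (x, p) \<partial>lborel)"

definition xbar :: "(real \<Rightarrow> (real^'d) \<times> (real^'d) \<Rightarrow> real) \<Rightarrow> real \<Rightarrow> real^'d" where
  "xbar W z = (\<chi> i. mom W z (\<lambda>x p. x $ i))"

definition pbar :: "(real \<Rightarrow> (real^'d) \<times> (real^'d) \<Rightarrow> real) \<Rightarrow> real \<Rightarrow> real^'d" where
  "pbar W z = (\<chi> i. mom W z (\<lambda>x p. p $ i))"

definition Vx :: "(real \<Rightarrow> (real^'d) \<times> (real^'d) \<Rightarrow> real) \<Rightarrow> real \<Rightarrow> real" where
  "Vx W z = mom W z (\<lambda>x p. (norm (x - xbar W z))\<^sup>2)"

definition Vp :: "(real \<Rightarrow> (real^'d) \<times> (real^'d) \<Rightarrow> real) \<Rightarrow> real \<Rightarrow> real" where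
  "Vp W z = mom W z (\<lambda>x p. (norm (p - pbar W z))\<^sup>2)"

definition Vxp :: "(real \<Rightarrow> (real^'d) \<times> (real^'d) \<Rightarrow> real) \<Rightarrow> real \<Rightarrow> real" where
  "Vxp W z = mom W z (\<lambda>x p. (x - xbar W z) \<bullet> (p - pbar W z))"

definition potint :: "real \<Rightarrow> (real \<Rightarrow> (real^'d) \<times> (real^'d) \<Rightarrow> real) \<Rightarrow> real \<Rightarrow> real" where
  "potint \<sigma> W z = (\<integral>x. (dens W z x) powr (\<sigma> + 1) \<partial>lborel)"

definition Hamil :: "real \<Rightarrow> real \<Rightarrow> (real \<Rightarrow> (real^'d) \<times> (real^'d) \<Rightarrow> real) \<Rightarrow> real \<Rightarrow> real" where
  "Hamil g \<sigma> W z = 1/2 * mom W z (\<lambda>x p. (norm p)\<^sup>2) - g / (\<sigma> + 1) * potint \<sigma> W z"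

definition Hbar :: "(real \<Rightarrow> (real^'d) \<times> (real^'d) \<Rightarrow> real) \<Rightarrow> real \<Rightarrow> real" where
  "Hbar W z = 1/2 * (norm (pbar W z))\<^sup>2"

text \<open>R = 2 pi \<integral> Phi(0,q) |q|^2 dq.  For the Fokker-Planck operator,
  2 trace D = 2 pi \<integral> Phi(0,q) |q|^2 dq as well, so R is the same in both cases.\<close>
definition Rcoef :: "(real \<Rightarrow> real^'d \<Rightarrow> real) \<Rightarrow> real" where
  "Rcoef \<Phi> = 2 * pi * (\<integral>q. \<Phi> 0 q * (norm q)\<^sup>2 \<partial>lborel)"

definition rapidly_decaying :: "(real \<Rightarrow> real^'d \<Rightarrow> real) \<Rightarrow> bool" where
  "rapidly_decaying \<Phi> \<longleftrightarrow> (\<forall>n::nat. \<exists>C. \<forall>w q. (1 + norm (w, q)) ^ n * \<bar>\<Phi> w q\<bar> \<le> C)"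

definition Fpoly :: "real \<Rightarrow> real \<Rightarrow> real \<Rightarrow> real \<Rightarrow> real \<Rightarrow> real \<Rightarrow> real \<Rightarrow> real" where
  "Fpoly ds R Vx0 Vxp0 H0 Hb z = Vx0 + 2 * Vxp0 * z + ds * (H0 - Hb) * z\<^sup>2 + ds * R / 3 * z ^ 3"

definition zblow :: "real \<Rightarrow> real \<Rightarrow> real \<Rightarrow> real \<Rightarrow> real \<Rightarrow> real" where
  "zblow ds R Vxp0 H0 Hb = (Hb - H0 + sqrt ((H0 - Hb)\<^sup>2 - 2 * R * Vxp0 / ds)) / R"

end

theory Submission
  imports Defs
begin

lemma mono_lemma:
  fixes f f' :: "real \<Rightarrow> real"
  assumes b: "0 \<le> b"
    and d: "\<And>x. 0 \<le> x \<Longrightarrow> x \<le> b \<Longrightarrow> (f has_real_derivative f' x) (at x within {0..})"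
    and n: "\<And>x. 0 \<le> x \<Longrightarrow> x \<le> b \<Longrightarrow> f' x \<ge> 0"
  shows "f 0 \<le> f b"
proof (rule DERIV_nonneg_imp_increasing_open[OF b])
  fix x :: real assume x: "0 < x" "x < b"
  have "x \<in> interior {0::real..}" using x by simp
  hence "at x within {0..} = at x" by (rule at_within_interior)
  thus "\<exists>y. DERIV f x :> y \<and> y \<ge> 0" using d[of x] n[of x] x by auto
next
  show "continuous_on {0..b} f"
    unfolding continuous_on_eq_continuous_within
  proof
    fix x assume x: "x \<in> {0..b}"
    have "continuous (at x within {0..}) f"
      using d[of x] x by (auto intro: DERIV_continuous)
    thus "continuous (at x within {0..b}) f"
      by (rule continuous_within_subset) auto
  qed
qed

lemma const_lemma:
  fixes f :: "real \<Rightarrow> real"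
  assumes b: "0 \<le> b"
    and d: "\<And>x. 0 \<le> x \<Longrightarrow> x \<le> b \<Longrightarrow> (f has_real_derivative 0) (at x within {0..})"
  shows "f b = f 0"
proof -
  have "f 0 \<le> f b" by (rule mono_lemma[OF b d]) auto
  moreover have "(\<lambda>x. - f x) 0 \<le> (\<lambda>x. - f x) b"
    by (rule mono_lemma[OF b, where f'="\<lambda>_. 0"]) (auto intro!: derivative_eq_intros d)
  ultimately show ?thesis by simp
qed

lemma expand:
  fixes U V :: "'a \<Rightarrow> real^'d" and w :: "'a \<Rightarrow> real"
  assumes iw: "integrable M w"
    and iuv: "integrable M (\<lambda>t. (U t \<bullet> V t) * w t)"
    and iu: "\<And>i. integrable M (\<lambda>t. U t $ i * w t)"
    and iv: "\<And>i. integrable M (\<lambda>t. V t $ i * w t)"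
    and one: "(\<integral>t. w t \<partial>M) = 1"
  shows "(\<integral>t. ((U t - a) \<bullet> (V t - b)) * w t \<partial>M) =
    (\<integral>t. (U t \<bullet> V t) * w t \<partial>M) - a \<bullet> (\<chi> i. \<integral>t. V t $ i * w t \<partial>M)
      - (\<chi> i. \<integral>t. U t $ i * w t \<partial>M) \<bullet> b + a \<bullet> b"
proof -
  have eq: "\<And>t. ((U t - a) \<bullet> (V t - b)) * w t = (U t \<bullet> V t) * w t
     - (\<Sum>i\<in>UNIV. a $ i * (V t $ i * w t)) - (\<Sum>i\<in>UNIV. b $ i * (U t $ i * w t))
     + (a \<bullet> b) * w t"
  proof -
    fix t
    have "((U t - a) \<bullet> (V t - b)) * w t = (\<Sum>i\<in>UNIV. (U t $ i - a $ i) * (V t $ i - b $ i) * w t)"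
      by (simp add: inner_vec_def sum_distrib_right)
    also have "\<dots> = (\<Sum>i\<in>UNIV. (U t $ i * V t $ i * w t - a $ i * (V t $ i * w t)) - b $ i * (U t $ i * w t) + a $ i * b $ i * w t)"
      by (rule sum.cong) (auto simp: algebra_simps)
    also have "\<dots> = (U t \<bullet> V t) * w t
     - (\<Sum>i\<in>UNIV. a $ i * (V t $ i * w t)) - (\<Sum>i\<in>UNIV. b $ i * (U t $ i * w t))
     + (a \<bullet> b) * w t"
      by (simp add: sum.distrib sum_subtractf inner_vec_def sum_distrib_right)
    finally show "?thesis t" .
  qed
  show ?thesis
    unfolding eq
    using iw iuv iu iv one
    by (simp add: integral_add integral_diff integral_sum integrable_sum inner_vec_def sum_distrib_left
        mult.commute)
qed

lemma c: "\<bar>y::real\<bar> \<le> 1 + y\<^sup>2"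
proof -
  have "0 \<le> (\<bar>y\<bar> - 1)\<^sup>2" by simp
  hence "2 * \<bar>y\<bar> \<le> \<bar>y\<bar>\<^sup>2 + 1" by (simp add: power2_diff)
  thus ?thesis by simp
qed
lemma meas_mult:
  fixes w f :: "(real^'d) \<times> (real^'d) \<Rightarrow> real"
  assumes "continuous_on UNIV f" "w \<in> borel_measurable lborel"
  shows "(\<lambda>t. f t * w t) \<in> borel_measurable lborel"
proof -
  have "f \<in> borel_measurable borel" using assms(1) by (rule borel_measurable_continuous_onI)
  thus ?thesis using assms(2) by (intro borel_measurable_times) auto
qed

lemma integ_lemmas:
  fixes w :: "(real^'d) \<times> (real^'d) \<Rightarrow> real"
  assumes iw: "integrable lborel w" and nn: "\<And>t. w t \<ge> 0"
    and ix: "integrable lborel (\<lambda>t. (norm (fst t))\<^sup>2 * w t)"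
    and ip: "integrable lborel (\<lambda>t. (norm (snd t))\<^sup>2 * w t)"
  shows "integrable lborel (\<lambda>t. fst t $ i * w t)"
    and "integrable lborel (\<lambda>t. snd t $ i * w t)"
    and "integrable lborel (\<lambda>t. (fst t \<bullet> snd t) * w t)"
    and "integrable lborel (\<lambda>t. (fst t \<bullet> fst t) * w t)"
    and "integrable lborel (\<lambda>t. (snd t \<bullet> snd t) * w t)"
proof -
  have wm: "w \<in> borel_measurable lborel" using iw by auto
  have i1: "integrable lborel (\<lambda>t. w t + (norm (fst t))\<^sup>2 * w t)" using iw ix by auto
  have i2: "integrable lborel (\<lambda>t. w t + (norm (snd t))\<^sup>2 * w t)" using iw ip by auto
  have i3: "integrable lborel (\<lambda>t. (norm (fst t))\<^sup>2 * w t + (norm (snd t))\<^sup>2 * w t)" using ix ip by auto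
  show "integrable lborel (\<lambda>t. fst t $ i * w t)"
  proof (rule Bochner_Integration.integrable_bound[OF i1])
    show "(\<lambda>t. fst t $ i * w t) \<in> borel_measurable lborel" using wm by (intro meas_mult continuous_intros)
    show "AE t in lborel. norm (fst t $ i * w t) \<le> norm (w t + (norm (fst t))\<^sup>2 * w t)"
    proof (rule AE_I2)
      fix t :: "(real^'d) \<times> (real^'d)"
      have "\<bar>fst t $ i\<bar> \<le> 1 + (norm (fst t))\<^sup>2"
        using component_le_norm_cart[of "fst t" i] c[of "norm (fst t)"] by simp
      hence "\<bar>fst t $ i\<bar> * w t \<le> (1 + (norm (fst t))\<^sup>2) * w t" using nn[of t] by (rule mult_right_mono)
      thus "norm (fst t $ i * w t) \<le> norm (w t + (norm (fst t))\<^sup>2 * w t)"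
        using nn[of t] by (simp add: abs_mult algebra_simps)
    qed
  qed
  show "integrable lborel (\<lambda>t. snd t $ i * w t)"
  proof (rule Bochner_Integration.integrable_bound[OF i2])
    show "(\<lambda>t. snd t $ i * w t) \<in> borel_measurable lborel" using wm by (intro meas_mult continuous_intros)
    show "AE t in lborel. norm (snd t $ i * w t) \<le> norm (w t + (norm (snd t))\<^sup>2 * w t)"
    proof (rule AE_I2)
      fix t :: "(real^'d) \<times> (real^'d)"
      have "\<bar>snd t $ i\<bar> \<le> 1 + (norm (snd t))\<^sup>2"
        using component_le_norm_cart[of "snd t" i] c[of "norm (snd t)"] by simp
      hence "\<bar>snd t $ i\<bar> * w t \<le> (1 + (norm (snd t))\<^sup>2) * w t" using nn[of t] by (rule mult_right_mono)
      thus "norm (snd t $ i * w t) \<le> norm (w t + (norm (snd t))\<^sup>2 * w t)"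
        using nn[of t] by (simp add: abs_mult algebra_simps)
    qed
  qed
  show "integrable lborel (\<lambda>t. (fst t \<bullet> snd t) * w t)"
  proof (rule Bochner_Integration.integrable_bound[OF i3])
    show "(\<lambda>t. (fst t \<bullet> snd t) * w t) \<in> borel_measurable lborel" using wm by (intro meas_mult continuous_intros)
    show "AE t in lborel. norm ((fst t \<bullet> snd t) * w t) \<le> norm ((norm (fst t))\<^sup>2 * w t + (norm (snd t))\<^sup>2 * w t)"
    proof (rule AE_I2)
      fix t :: "(real^'d) \<times> (real^'d)"
      have "\<bar>fst t \<bullet> snd t\<bar> \<le> norm (fst t) * norm (snd t)" by (rule Cauchy_Schwarz_ineq2)
      also have "\<dots> \<le> (norm (fst t))\<^sup>2 + (norm (snd t))\<^sup>2"
        using sum_squares_bound[of "norm (fst t)" "norm (snd t)"]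
          mult_nonneg_nonneg[OF norm_ge_zero[of "fst t"] norm_ge_zero[of "snd t"]] by linarith
      finally have "\<bar>fst t \<bullet> snd t\<bar> * w t \<le> ((norm (fst t))\<^sup>2 + (norm (snd t))\<^sup>2) * w t"
        using nn[of t] by (rule mult_right_mono)
      thus "norm ((fst t \<bullet> snd t) * w t) \<le> norm ((norm (fst t))\<^sup>2 * w t + (norm (snd t))\<^sup>2 * w t)"
        using nn[of t] by (simp add: abs_mult algebra_simps)
    qed
  qed
  show "integrable lborel (\<lambda>t. (fst t \<bullet> fst t) * w t)"
    using ix by (simp add: power2_norm_eq_inner)
  show "integrable lborel (\<lambda>t. (snd t \<bullet> snd t) * w t)"
    using ip by (simp add: power2_norm_eq_inner)
qed

theorem proposition3:
  fixes \<Phi> :: "real \<Rightarrow> real^'d \<Rightarrow> real"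
    and W :: "real \<Rightarrow> (real^'d) \<times> (real^'d) \<Rightarrow> real"
    and g \<sigma> :: real and zs :: ereal
  defines "ds \<equiv> real CARD('d) * \<sigma>"
  assumes Phi_nonneg: "\<And>w q. \<Phi> w q \<ge> 0"
    and Phi_sym: "\<And>w q. \<Phi> w q = \<Phi> (-w) q \<and> \<Phi> w q = \<Phi> w (-q) \<and> \<Phi> w q = \<Phi> (-w) (-q)"
    and Phi_meas: "(\<lambda>wq. \<Phi> (fst wq) (snd wq)) \<in> borel_measurable lborel"
    and Phi_decay: "rapidly_decaying \<Phi>"
    and sigma_pos: "\<sigma> > 0" and ds_ge: "ds \<ge> 2" and g_pos: "g > 0"
    and zs_pos: "zs > 0"
    \<comment> \<open>regularity of the local solution on [0, zs)\<close>
    and W_nonneg: "\<And>z xp. 0 \<le> z \<Longrightarrow> ereal z < zs \<Longrightarrow> W z xp \<ge> 0"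
    and W_int: "\<And>z. 0 \<le> z \<Longrightarrow> ereal z < zs \<Longrightarrow> integrable lborel (W z)"
    and W_L2: "\<And>z. 0 \<le> z \<Longrightarrow> ereal z < zs \<Longrightarrow> integrable lborel (\<lambda>xp. (W z xp)\<^sup>2)"
    and W_x2: "\<And>z. 0 \<le> z \<Longrightarrow> ereal z < zs \<Longrightarrow>
                 integrable lborel (\<lambda>xp. (norm (fst xp))\<^sup>2 * W z xp)"
    and W_p2: "\<And>z. 0 \<le> z \<Longrightarrow> ereal z < zs \<Longrightarrow>
                 integrable lborel (\<lambda>xp. (norm (snd xp))\<^sup>2 * W z xp)"
    and W_pot: "\<And>z. 0 \<le> z \<Longrightarrow> ereal z < zs \<Longrightarrow>
                 integrable lborel (\<lambda>x. (dens W z x) powr (\<sigma> + 1))"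
    and W_norm: "\<And>z. 0 \<le> z \<Longrightarrow> ereal z < zs \<Longrightarrow> mom W z (\<lambda>x p. 1) = 1"
    and Vx_pos: "\<And>z. 0 \<le> z \<Longrightarrow> ereal z < zs \<Longrightarrow> Vx W z > 0"
    and Vp_pos: "\<And>z. 0 \<le> z \<Longrightarrow> ereal z < zs \<Longrightarrow> Vp W z > 0"
    and mixed: "\<And>z. 0 \<le> z \<Longrightarrow> ereal z < zs \<Longrightarrow> (Vxp W z)\<^sup>2 \<le> Vx W z * Vp W z"
    \<comment> \<open>weak formulation with test functions x_i, p_i, |x|^2, x.p, and energy law\<close>
    and wf_x: "\<And>z i. 0 \<le> z \<Longrightarrow> ereal z < zs \<Longrightarrow>
                 ((\<lambda>s. mom W s (\<lambda>x p. x $ i)) has_real_derivative mom W z (\<lambda>x p. p $ i))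
                   (at z within {0..})"
    and wf_p: "\<And>z i. 0 \<le> z \<Longrightarrow> ereal z < zs \<Longrightarrow>
                 ((\<lambda>s. mom W s (\<lambda>x p. p $ i)) has_real_derivative 0) (at z within {0..})"
    and wf_x2: "\<And>z. 0 \<le> z \<Longrightarrow> ereal z < zs \<Longrightarrow>
                 ((\<lambda>s. mom W s (\<lambda>x p. (norm x)\<^sup>2)) has_real_derivative
                    2 * mom W z (\<lambda>x p. x \<bullet> p)) (at z within {0..})"
    and wf_xp: "\<And>z. 0 \<le> z \<Longrightarrow> ereal z < zs \<Longrightarrow>
                 ((\<lambda>s. mom W s (\<lambda>x p. x \<bullet> p)) has_real_derivative
                    mom W z (\<lambda>x p. (norm p)\<^sup>2) - g * ds / (\<sigma> + 1) * potint \<sigma> W z)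
                   (at z within {0..})"
    and energy: "\<And>z. 0 \<le> z \<Longrightarrow> ereal z < zs \<Longrightarrow>
                 ((\<lambda>s. Hamil g \<sigma> W s) has_real_derivative Rcoef \<Phi> / 2) (at z within {0..})"
    \<comment> \<open>blow-up criterion\<close>
    and F_nonpos: "Fpoly ds (Rcoef \<Phi>) (Vx W 0) (Vxp W 0) (Hamil g \<sigma> W 0) (Hbar W 0)
                     (zblow ds (Rcoef \<Phi>) (Vxp W 0) (Hamil g \<sigma> W 0) (Hbar W 0)) \<le> 0"
    and cases: "Vxp W 0 < 0 \<or>
                (Vxp W 0 > 0 \<and>
                 Hamil g \<sigma> W 0 < Hbar W 0 - sqrt (2 * Rcoef \<Phi> * Vxp W 0 / ds))"
  shows "zs \<le> ereal (zblow ds (Rcoef \<Phi>) (Vxp W 0) (Hamil g \<sigma> W 0) (Hbar W 0))"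
proof (rule ccontr)
  define R where "R = Rcoef \<Phi>"
  define Z where "Z = zblow ds (Rcoef \<Phi>) (Vxp W 0) (Hamil g \<sigma> W 0) (Hbar W 0)"
  assume "\<not> zs \<le> ereal Z"
  hence Zlt: "ereal Z < zs" by auto
  have dspos: "ds > 0" using ds_ge by simp
  have R0: "R \<ge> 0" unfolding R_def Rcoef_def
    by (intro mult_nonneg_nonneg integral_nonneg_AE AE_I2) (auto intro: Phi_nonneg)
  have Z0: "Z \<ge> 0"
  proof (cases "R = 0")
    case True thus ?thesis by (simp add: Z_def zblow_def R_def)
  next
    case False
    hence Rp: "R > 0" using R0 by simp
    define H0 where "H0 = Hamil g \<sigma> W 0"
    define Hb where "Hb = Hbar W 0"
    define v where "v = Vxp W 0"
    have "Hb - H0 + sqrt ((H0 - Hb)\<^sup>2 - 2 * R * v / ds) \<ge> 0"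
    proof (cases "v < 0")
      case True
      have "2 * R * v / ds \<le> 0" using True Rp dspos
        by (simp add: divide_nonpos_pos mult_nonneg_nonpos)
      hence "sqrt ((H0 - Hb)\<^sup>2) \<le> sqrt ((H0 - Hb)\<^sup>2 - 2 * R * v / ds)"
        by (intro real_sqrt_le_mono) linarith
      thus ?thesis by simp
    next
      case False
      hence "Hb - H0 > sqrt (2 * R * v / ds)" using cases unfolding v_def H0_def Hb_def R_def by auto
      moreover have "sqrt (2 * R * v / ds) \<ge> 0" using False Rp dspos by simp
      moreover have "sqrt ((H0 - Hb)\<^sup>2 - 2 * R * v / ds) \<ge> 0"
      proof -
        have y0: "2 * R * v / ds \<ge> 0" using False Rp dspos by simp
        have "(sqrt (2 * R * v / ds))\<^sup>2 \<le> (Hb - H0)\<^sup>2"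
          using \<open>Hb - H0 > sqrt (2 * R * v / ds)\<close> y0 by (intro power_mono) auto
        hence "2 * R * v / ds \<le> (H0 - Hb)\<^sup>2" using y0 by (simp add: power2_commute)
        thus ?thesis by simp
      qed
      ultimately show ?thesis by linarith
    qed
    thus ?thesis using Rp by (simp add: Z_def zblow_def H0_def Hb_def v_def R_def)
  qed
  have inr: "ereal z < zs" if "0 \<le> z" "z \<le> Z" for z
    using Zlt that by (meson ereal_less_eq(3) order.strict_trans1)
  define X where "X i s = mom W s (\<lambda>x p. x $ i)" for i s
  define P where "P i s = mom W s (\<lambda>x p. p $ i)" for i s
  define A where "A s = mom W s (\<lambda>x p. (norm x)\<^sup>2)" for s
  define B where "B s = mom W s (\<lambda>x p. x \<bullet> p)" for s
  define M2 where "M2 s = mom W s (\<lambda>x p. (norm p)\<^sup>2)" for s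
  define H where "H s = Hamil g \<sigma> W s" for s
  define vx where "vx s = A s - (\<Sum>i\<in>UNIV. X i s * X i s)" for s
  define vxp where "vxp s = B s - (\<Sum>i\<in>UNIV. X i s * P i s)" for s
  have ints: "integrable lborel (\<lambda>t. fst t $ i * W s t)"
    "integrable lborel (\<lambda>t. snd t $ i * W s t)"
    "integrable lborel (\<lambda>t. (fst t \<bullet> snd t) * W s t)"
    "integrable lborel (\<lambda>t. (fst t \<bullet> fst t) * W s t)"
    "integrable lborel (\<lambda>t. (snd t \<bullet> snd t) * W s t)"
    if "0 \<le> s" "ereal s < zs" for s i
    using integ_lemmas[OF W_int[OF that] W_nonneg[OF that] W_x2[OF that] W_p2[OF that]] by auto
  have one: "(\<integral>t. W s t \<partial>lborel) = 1" if "0 \<le> s" "ereal s < zs" for s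
    using W_norm[OF that] by (simp add: mom_def)
  have xb: "(\<chi> i. \<integral>t. fst t $ i * W s t \<partial>lborel) = xbar W s" for s
    by (simp add: xbar_def mom_def)
  have pb: "(\<chi> i. \<integral>t. snd t $ i * W s t \<partial>lborel) = pbar W s" for s
    by (simp add: pbar_def mom_def)
  have idx: "Vx W s = vx s" if "0 \<le> s" "ereal s < zs" for s
  proof -
    have "Vx W s = (\<integral>t. ((fst t - xbar W s) \<bullet> (fst t - xbar W s)) * W s t \<partial>lborel)"
      by (simp add: Vx_def mom_def power2_norm_eq_inner)
    also have "\<dots> = (\<integral>t. (fst t \<bullet> fst t) * W s t \<partial>lborel) - xbar W s \<bullet> xbar W s"
      using expand[of lborel "W s" fst fst "xbar W s" "xbar W s", OF W_int[OF that] ints(4)[OF that]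
          ints(1)[OF that] ints(1)[OF that] one[OF that]]
      by (simp add: xb)
    also have "\<dots> = vx s"
      by (simp add: vx_def A_def X_def mom_def power2_norm_eq_inner inner_vec_def xbar_def)
    finally show ?thesis .
  qed
  have idxp: "Vxp W s = vxp s" if "0 \<le> s" "ereal s < zs" for s
  proof -
    have "Vxp W s = (\<integral>t. ((fst t - xbar W s) \<bullet> (snd t - pbar W s)) * W s t \<partial>lborel)"
      by (simp add: Vxp_def mom_def)
    also have "\<dots> = (\<integral>t. (fst t \<bullet> snd t) * W s t \<partial>lborel) - xbar W s \<bullet> pbar W s"
      using expand[of lborel "W s" fst snd "xbar W s" "pbar W s", OF W_int[OF that] ints(3)[OF that]
          ints(1)[OF that] ints(2)[OF that] one[OF that]]
      by (simp add: xb pb)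
    also have "\<dots> = vxp s"
      by (simp add: vxp_def B_def X_def P_def mom_def inner_vec_def xbar_def pbar_def)
    finally show ?thesis .
  qed
  have idp: "Vp W s = M2 s - (\<Sum>i\<in>UNIV. P i s * P i s)" if "0 \<le> s" "ereal s < zs" for s
  proof -
    have "Vp W s = (\<integral>t. ((snd t - pbar W s) \<bullet> (snd t - pbar W s)) * W s t \<partial>lborel)"
      by (simp add: Vp_def mom_def power2_norm_eq_inner)
    also have "\<dots> = (\<integral>t. (snd t \<bullet> snd t) * W s t \<partial>lborel) - pbar W s \<bullet> pbar W s"
      using expand[of lborel "W s" snd snd "pbar W s" "pbar W s", OF W_int[OF that] ints(5)[OF that]
          ints(2)[OF that] ints(2)[OF that] one[OF that]]
      by (simp add: pb)
    also have "\<dots> = M2 s - (\<Sum>i\<in>UNIV. P i s * P i s)"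
      by (simp add: M2_def P_def mom_def power2_norm_eq_inner inner_vec_def pbar_def)
    finally show ?thesis .
  qed
  have hb: "Hbar W s = 1/2 * (\<Sum>i\<in>UNIV. P i s * P i s)" for s
    by (simp add: Hbar_def power2_norm_eq_inner inner_vec_def pbar_def P_def)
  have dX: "(X i has_real_derivative P i s) (at s within {0..})" if "0 \<le> s" "ereal s < zs" for i s
    using wf_x[OF that, of i] unfolding X_def P_def by simp
  have dP: "(P i has_real_derivative 0) (at s within {0..})" if "0 \<le> s" "ereal s < zs" for i s
    using wf_p[OF that, of i] unfolding P_def by simp
  have dA: "(A has_real_derivative 2 * B s) (at s within {0..})" if "0 \<le> s" "ereal s < zs" for s
    using wf_x2[OF that] unfolding A_def B_def by simp
  have dB: "(B has_real_derivative M2 s - g * ds / (\<sigma> + 1) * potint \<sigma> W s) (at s within {0..})"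
    if "0 \<le> s" "ereal s < zs" for s
    using wf_xp[OF that] unfolding B_def M2_def by simp
  have dvx: "(vx has_real_derivative 2 * vxp s) (at s within {0..})" if "0 \<le> s" "ereal s < zs" for s
  proof -
    have "((\<lambda>s. A s - (\<Sum>i\<in>UNIV. X i s * X i s)) has_real_derivative
        2 * B s - (\<Sum>i\<in>UNIV. P i s * X i s + P i s * X i s)) (at s within {0..})"
      by (intro DERIV_diff dA[OF that] DERIV_sum DERIV_mult dX[OF that])
    moreover have "2 * B s - (\<Sum>i\<in>UNIV. P i s * X i s + P i s * X i s) = 2 * vxp s"
      by (simp add: vxp_def sum.distrib algebra_simps sum_distrib_left)
    ultimately show ?thesis unfolding vx_def[abs_def] by simp
  qed
  define vxp' where "vxp' s = M2 s - g * ds / (\<sigma> + 1) * potint \<sigma> W s - (\<Sum>i\<in>UNIV. P i s * P i s)" for s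
  have dvxp: "(vxp has_real_derivative vxp' s) (at s within {0..})" if "0 \<le> s" "ereal s < zs" for s
  proof -
    have "((\<lambda>s. B s - (\<Sum>i\<in>UNIV. X i s * P i s)) has_real_derivative
        (M2 s - g * ds / (\<sigma> + 1) * potint \<sigma> W s) - (\<Sum>i\<in>UNIV. P i s * P i s + 0 * X i s)) (at s within {0..})"
      by (intro DERIV_diff dB[OF that] DERIV_sum DERIV_mult dX[OF that] dP[OF that])
    thus ?thesis unfolding vxp_def[abs_def] vxp'_def by simp
  qed
  have Pc: "P i s = P i 0" if "0 \<le> s" "s \<le> Z" for i s
  proof (rule const_lemma[OF that(1)])
    fix x assume x: "0 \<le> x" "x \<le> s"
    hence "ereal x < zs" using inr[of x] that by simp
    thus "(P i has_real_derivative 0) (at x within {0..})" using dP x by simp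
  qed
  have Hl: "H s = H 0 + R / 2 * s" if "0 \<le> s" "s \<le> Z" for s
  proof -
    have "(\<lambda>s. H s - R / 2 * s) s = (\<lambda>s. H s - R / 2 * s) 0"
    proof (rule const_lemma[OF that(1)])
      fix x assume x: "0 \<le> x" "x \<le> s"
      have "ereal x < zs" using inr[of x] x that by simp
      hence "(H has_real_derivative R / 2) (at x within {0..})"
        using energy[of x] x unfolding H_def R_def by simp
      thus "((\<lambda>s. H s - R / 2 * s) has_real_derivative 0) (at x within {0..})"
        by (auto intro!: derivative_eq_intros)
    qed
    thus ?thesis by simp
  qed
  define Hb0 where "Hb0 = Hbar W 0"
  define Q where "Q = (\<Sum>i\<in>UNIV. P i 0 * P i 0)"
  have Hb0Q: "Hb0 = Q / 2" by (simp add: Hb0_def Q_def hb)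
  define E where "E s = vxp 0 + ds * (H 0 - Hb0) * s + ds * R * s\<^sup>2 / 4 - vxp s" for s
  define E' where "E' s = ds * (H 0 - Hb0) + ds * R * s / 2 - vxp' s" for s
  have dE: "(E has_real_derivative E' s) (at s within {0..})" if "0 \<le> s" "s \<le> Z" for s
  proof -
    have "ereal s < zs" using inr that by simp
    note d = dvxp[OF that(1) this]
    show ?thesis unfolding E_def[abs_def] E'_def
      by (rule derivative_eq_intros refl d | simp)+
  qed
  have E'nn: "E' s \<ge> 0" if "0 \<le> s" "s \<le> Z" for s
  proof -
    have zs': "ereal s < zs" using inr that by simp
    have sumP: "(\<Sum>i\<in>UNIV. P i s * P i s) = Q" unfolding Q_def using Pc[OF that] by simp
    have Vp: "M2 s - Q > 0" using Vp_pos[OF that(1) zs'] idp[OF that(1) zs'] sumP by simp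
    define c where "c = g / (\<sigma> + 1) * potint \<sigma> W s"
    have Hs: "H s = M2 s / 2 - c" by (simp add: H_def Hamil_def M2_def c_def)
    have c2: "g * ds / (\<sigma> + 1) * potint \<sigma> W s = ds * c" by (simp add: c_def)
    have "E' s = (ds / 2 - 1) * (M2 s - Q)"
      unfolding E'_def vxp'_def sumP c2 Hb0Q using Hl[OF that] Hs
      by (simp add: algebra_simps)
    thus ?thesis using Vp ds_ge by simp
  qed
  have Enn: "E s \<ge> 0" if "0 \<le> s" "s \<le> Z" for s
  proof -
    have "E 0 \<le> E s"
      by (rule mono_lemma[OF that(1), of E E']) (use dE E'nn that in auto)
    thus ?thesis by (simp add: E_def)
  qed
  define D where "D s = vx 0 + 2 * vxp 0 * s + ds * (H 0 - Hb0) * s\<^sup>2 + ds * R * s ^ 3 / 6 - vx s" for s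
  have dD: "(D has_real_derivative 2 * E s) (at s within {0..})" if "0 \<le> s" "s \<le> Z" for s
  proof -
    have "ereal s < zs" using inr that by simp
    note d = dvx[OF that(1) this]
    have "(D has_real_derivative 2 * vxp 0 + ds * (H 0 - Hb0) * (2 * s) + ds * R * (3 * s\<^sup>2) / 6 - 2 * vxp s) (at s within {0..})"
      unfolding D_def[abs_def]
      by (rule derivative_eq_intros refl d | simp)+
    moreover have "2 * vxp 0 + ds * (H 0 - Hb0) * (2 * s) + ds * R * (3 * s\<^sup>2) / 6 - 2 * vxp s = 2 * E s"
      by (simp add: E_def algebra_simps)
    ultimately show ?thesis by simp
  qed
  have "D 0 \<le> D Z"
    by (rule mono_lemma[OF Z0, of D "\<lambda>s. 2 * E s"]) (use dD Enn in auto)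
  hence G: "vx Z \<le> vx 0 + 2 * vxp 0 * Z + ds * (H 0 - Hb0) * Z\<^sup>2 + ds * R * Z ^ 3 / 6"
    by (simp add: D_def)
  have "ds * R * Z ^ 3 / 6 \<le> ds * R * Z ^ 3 / 3"
  proof -
    have "ds * R * Z ^ 3 \<ge> 0" using dspos R0 Z0 by simp
    thus ?thesis by linarith
  qed
  moreover have z00: "ereal 0 < zs" using zs_pos by (simp add: zero_ereal_def)
  moreover have "ds * R / 3 * Z ^ 3 = ds * R * Z ^ 3 / 3" by simp
  ultimately have "vx Z \<le> Fpoly ds R (Vx W 0) (Vxp W 0) (H 0) Hb0 Z"
    using G unfolding Fpoly_def idx[OF order.refl z00] idxp[OF order.refl z00] by linarith
  also have "\<dots> \<le> 0" using F_nonpos by (simp add: R_def H_def Hb0_def Z_def)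
  finally have "vx Z \<le> 0" .
  moreover have "vx Z > 0" using Vx_pos[OF Z0 Zlt] idx[OF Z0 Zlt] by simp
  ultimately show False by simp
qed

end
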